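(* Let $X$ be a locally compact separable metrizable space, $Z\subseteq X$ compact, and let $\mathcal U=(\mathfrak P,\{\mathcal U_{\mathfrak p}\},\{\Phi_{\mathfrak p\mathfrak q}\})$ be an abstract good coordinate system of $Z$ in the strong sense, with $\mathcal U_{\mathfrak p}=(U_{\mathfrak p},S_{\mathfrak p},\psi_{\mathfrak p})$. Let $|\mathcal U|=(\coprod_{\mathfrak p}U_{\mathfrak p})/\sim$ with the quotient topology. For each $\mathfrak p$ choose an open $U'_{\mathfrak p}\Subset U_{\mathfrak p}$ and denote also by $U'_{\mathfrak p}$ its image under the natural map $U_{\mathfrak p}\to|\mathcal U|$. Then $U'=\bigcup_{\mathfrak p\in\mathfrak P}U'_{\mathfrak p}\subseteq|\mathcal U|$, equipped with the subspace topology induced from $|\mathcal U|$, is separable and metrizable.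
   Context: An abstract K-chart of $X$ is a triple $(U,S,\psi)$ where $U$ is a locally compact separable metrizable space, $S\subseteq U$ is closed, and $\psi:S\to X$ is a homeomorphism onto an open subset of $X$. Given abstract K-charts $\mathcal U_i=(U_i,S_i,\psi_i)$ ($i=1,2$), a coordinate change from $\mathcal U_1$ to $\mathcal U_2$ is a pair $(U_{21},\varphi_{21})$ with: (1) $U_{21}\subseteq U_1$ open; (2) $\varphi_{21}:U_{21}\to U_2$ a topological embedding; (3) $S_1\cap U_{21}=\varphi_{21}^{-1}(S_2)$ and $\psi_2\circ\varphi_{21}=\psi_1$ on $S_1\cap U_{21}$; (4) $\psi_1(S_1\cap U_{21})=\psi_1(S_1)\cap\psi_2(S_2)$. An abstract good coordinate system of $Z$ in the weak sense is $(\mathfrak P,\{\mathcal U_{\mathfrak p}\},\{\Phi_{\mathfrak p\mathfrak q}\})$ where: (1) $\mathfrak P$ is a finite partially ordered set; (2) each $\mathcal U_{\mathfrak p}=(U_{\mathfrak p},S_{\mathfrak p},\psi_{\mathfrak p})$ is an abstract K-chart; (3) for $\mathfrak q\le\mathfrak p$, $\Phi_{\mathfrak p\mathfrak q}=(U_{\mathfrak p\mathfrak q},\varphi_{\mathfrak p\mathfrak q})$ is a coordinate change from $\mathcal U_{\mathfrak q}$ to $\mathcal U_{\mathfrak p}$, with $U_{\mathfrak p\mathfrak p}=U_{\mathfrak p}$ and $\varphi_{\mathfrak p\mathfrak p}=\mathrm{id}$; (4) if $\mathfrak r\le\mathfrak q\le\mathfrak p$ then $\varphi_{\mathfrak p\mathfrak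 r}=\varphi_{\mathfrak p\mathfrak q}\circ\varphi_{\mathfrak q\mathfrak r}$ on $\varphi_{\mathfrak q\mathfrak r}^{-1}(U_{\mathfrak p\mathfrak q})\cap U_{\mathfrak p\mathfrak r}$; (5) if $\psi_{\mathfrak p}(S_{\mathfrak p})\cap\psi_{\mathfrak q}(S_{\mathfrak q})\neq\emptyset$ then $\mathfrak p\le\mathfrak q$ or $\mathfrak q\le\mathfrak p$; (6) $\bigcup_{\mathfrak p}\psi_{\mathfrak p}(S_{\mathfrak p})\supseteq Z$. On $\coprod_{\mathfrak p}U_{\mathfrak p}$ define a relation $\sim$: for $x\in U_{\mathfrak p}$, $y\in U_{\mathfrak q}$, $x\sim y$ iff (a) $\mathfrak p=\mathfrak q$ and $x=y$, or (b) $\mathfrak p\le\mathfrak q$, $x\in U_{\mathfrak q\mathfrak p}$ and $y=\varphi_{\mathfrak q\mathfrak p}(x)$, or (c) $\mathfrak q\le\mathfrak p$, $y\in U_{\mathfrak p\mathfrak q}$ and $x=\varphi_{\mathfrak p\mathfrak q}(y)$. The system is an abstract good coordinate system of $Z$ in the strong sense if it is one in the weak sense and moreover $\sim$ is an equivalence relation and the quotient $(\coprod_{\mathfrak p}U_{\mathfrak p})/\sim$ with the quotient topology is Hausdorff. For an open subset $V$ of a separable metrizable space $U$, $V\Subset U$ means the closure of $V$ in $U$ is compact. *)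

theory Defs
  imports "HOL-Analysis.Analysis"
begin

definition qclass :: "'a topology \<Rightarrow> ('a \<Rightarrow> 'a \<Rightarrow> bool) \<Rightarrow> 'a \<Rightarrow> 'a set" where
  "qclass X r x = {y \<in> topspace X. r x y}"

lemma istopology_quotient:
  "istopology (\<lambda>T. T \<subseteq> qclass X r ` topspace X \<and>
                   openin X {x \<in> topspace X. qclass X r x \<in> T})"
  unfolding istopology_def
proof (rule conjI; intro allI impI)
  fix S T :: "'a set set"
  assume a: "S \<subseteq> qclass X r ` topspace X \<and> openin X {x \<in> topspace X. qclass X r x \<in> S}"
     and b: "T \<subseteq> qclass X r ` topspace X \<and> openin X {x \<in> topspace X. qclass X r x \<in> T}"
  have "{x \<in> topspace X. qclass X r x \<in> S \<inter> T} =
        {x \<in> topspace X. qclass X r x \<in> S} \<inter> {x \<in> topspace X. qclass X r x \<in> T}" by blast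
  moreover have "openin X ({x \<in> topspace X. qclass X r x \<in> S} \<inter> {x \<in> topspace X. qclass X r x \<in> T})"
    using a b by (intro openin_Int) auto
  ultimately show "S \<inter> T \<subseteq> qclass X r ` topspace X \<and> openin X {x \<in> topspace X. qclass X r x \<in> S \<inter> T}"
    using a by auto
next
  fix K :: "'a set set set"
  assume k: "\<forall>S\<in>K. S \<subseteq> qclass X r ` topspace X \<and> openin X {x \<in> topspace X. qclass X r x \<in> S}"
  have "{x \<in> topspace X. qclass X r x \<in> \<Union>K} = (\<Union>S\<in>K. {x \<in> topspace X. qclass X r x \<in> S})" by blast
  moreover have "openin X (\<Union>S\<in>K. {x \<in> topspace X. qclass X r x \<in> S})"
    using k by (intro openin_Union) auto
  ultimately show "\<Union>K \<subseteq> qclass X r ` topspace X \<and> openin X {x \<in> topspace X. qclass X r x \<in> \<Union>K}"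
    using k by auto
qed

text \<open>Quotient of X by r (meant for an equivalence relation r on topspace X):
  points are the classes, a set of classes is open iff its preimage is open.\<close>
definition quotient_topology :: "'a topology \<Rightarrow> ('a \<Rightarrow> 'a \<Rightarrow> bool) \<Rightarrow> 'a set topology" where
  "quotient_topology X r = topology (\<lambda>T. T \<subseteq> qclass X r ` topspace X \<and>
                   openin X {x \<in> topspace X. qclass X r x \<in> T})"

definition lcsm_space :: "'a topology \<Rightarrow> bool" where
  "lcsm_space U \<longleftrightarrow> locally_compact_space U \<and> separable_space U \<and> metrizable_space U"

definition abstract_K_chart :: "'x topology \<Rightarrow> 'a topology \<Rightarrow> 'a set \<Rightarrow> ('a \<Rightarrow> 'x) \<Rightarrow> bool" where
  "abstract_K_chart X U S psi \<longleftrightarrow>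
     lcsm_space U \<and> closedin U S \<and>
     homeomorphic_map (subtopology U S) (subtopology X (psi ` S)) psi \<and>
     openin X (psi ` S)"

definition coordinate_change ::
  "'a topology \<Rightarrow> 'a set \<Rightarrow> ('a \<Rightarrow> 'x) \<Rightarrow> 'a topology \<Rightarrow> 'a set \<Rightarrow> ('a \<Rightarrow> 'x)
   \<Rightarrow> 'a set \<Rightarrow> ('a \<Rightarrow> 'a) \<Rightarrow> bool" where
  "coordinate_change U1 S1 psi1 U2 S2 psi2 U21 phi21 \<longleftrightarrow>
     openin U1 U21 \<and>
     embedding_map (subtopology U1 U21) U2 phi21 \<and>
     S1 \<inter> U21 = {x \<in> U21. phi21 x \<in> S2} \<and>
     (\<forall>x \<in> S1 \<inter> U21. psi2 (phi21 x) = psi1 x) \<and>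
     psi1 ` (S1 \<inter> U21) = psi1 ` S1 \<inter> psi2 ` S2"

text \<open>The index poset is
  (P, le); the chart at p is (U p, S p, psi p); for q \<le> p the coordinate change
  Phi_pq from U_q to U_p is (Upq p q, phi p q).\<close>
definition good_coord_system_weak ::
  "'x topology \<Rightarrow> 'x set \<Rightarrow> 'p set \<Rightarrow> ('p \<Rightarrow> 'p \<Rightarrow> bool) \<Rightarrow> ('p \<Rightarrow> 'a topology)
   \<Rightarrow> ('p \<Rightarrow> 'a set) \<Rightarrow> ('p \<Rightarrow> 'a \<Rightarrow> 'x) \<Rightarrow> ('p \<Rightarrow> 'p \<Rightarrow> 'a set) \<Rightarrow> ('p \<Rightarrow> 'p \<Rightarrow> 'a \<Rightarrow> 'a)
   \<Rightarrow> bool" where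
  "good_coord_system_weak X Z P le U S psi Upq phi \<longleftrightarrow>
     finite P \<and>
     (\<forall>p\<in>P. le p p) \<and>
     (\<forall>p\<in>P. \<forall>q\<in>P. le p q \<and> le q p \<longrightarrow> p = q) \<and>
     (\<forall>p\<in>P. \<forall>q\<in>P. \<forall>r\<in>P. le p q \<and> le q r \<longrightarrow> le p r) \<and>
     (\<forall>p\<in>P. abstract_K_chart X (U p) (S p) (psi p)) \<and>
     (\<forall>p\<in>P. \<forall>q\<in>P. le q p \<longrightarrow>
        coordinate_change (U q) (S q) (psi q) (U p) (S p) (psi p) (Upq p q) (phi p q)) \<and>
     (\<forall>p\<in>P. Upq p p = topspace (U p) \<and> (\<forall>x \<in> topspace (U p). phi p p x = x)) \<and>
     (\<forall>p\<in>P. \<forall>q\<in>P. \<forall>r\<in>P. le r q \<and> le q p \<longrightarrow>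
        (\<forall>x \<in> {x \<in> Upq q r. phi q r x \<in> Upq p q} \<inter> Upq p r.
           phi p r x = phi p q (phi q r x))) \<and>
     (\<forall>p\<in>P. \<forall>q\<in>P. psi p ` S p \<inter> psi q ` S q \<noteq> {} \<longrightarrow> le p q \<or> le q p) \<and>
     Z \<subseteq> (\<Union>p\<in>P. psi p ` S p)"

definition gcs_rel ::
  "'p set \<Rightarrow> ('p \<Rightarrow> 'p \<Rightarrow> bool) \<Rightarrow> ('p \<Rightarrow> 'a topology) \<Rightarrow> ('p \<Rightarrow> 'p \<Rightarrow> 'a set)
   \<Rightarrow> ('p \<Rightarrow> 'p \<Rightarrow> 'a \<Rightarrow> 'a) \<Rightarrow> 'p \<times> 'a \<Rightarrow> 'p \<times> 'a \<Rightarrow> bool" where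
  "gcs_rel P le U Upq phi = (\<lambda>(p, x) (q, y).
     p \<in> P \<and> q \<in> P \<and> x \<in> topspace (U p) \<and> y \<in> topspace (U q) \<and>
     ((p = q \<and> x = y) \<or>
      (le p q \<and> x \<in> Upq q p \<and> y = phi q p x) \<or>
      (le q p \<and> y \<in> Upq p q \<and> x = phi p q y)))"

definition gcs_disjoint_union :: "'p set \<Rightarrow> ('p \<Rightarrow> 'a topology) \<Rightarrow> ('p \<times> 'a) topology" where
  "gcs_disjoint_union P U = sum_topology U P"

definition gcs_quotient ::
  "'p set \<Rightarrow> ('p \<Rightarrow> 'p \<Rightarrow> bool) \<Rightarrow> ('p \<Rightarrow> 'a topology) \<Rightarrow> ('p \<Rightarrow> 'p \<Rightarrow> 'a set)
   \<Rightarrow> ('p \<Rightarrow> 'p \<Rightarrow> 'a \<Rightarrow> 'a) \<Rightarrow> ('p \<times> 'a) set topology" where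
  "gcs_quotient P le U Upq phi =
     quotient_topology (gcs_disjoint_union P U) (gcs_rel P le U Upq phi)"

definition gcs_proj ::
  "'p set \<Rightarrow> ('p \<Rightarrow> 'p \<Rightarrow> bool) \<Rightarrow> ('p \<Rightarrow> 'a topology) \<Rightarrow> ('p \<Rightarrow> 'p \<Rightarrow> 'a set)
   \<Rightarrow> ('p \<Rightarrow> 'p \<Rightarrow> 'a \<Rightarrow> 'a) \<Rightarrow> 'p \<Rightarrow> 'a \<Rightarrow> ('p \<times> 'a) set" where
  "gcs_proj P le U Upq phi p x = qclass (gcs_disjoint_union P U) (gcs_rel P le U Upq phi) (p, x)"

definition good_coord_system_strong ::
  "'x topology \<Rightarrow> 'x set \<Rightarrow> 'p set \<Rightarrow> ('p \<Rightarrow> 'p \<Rightarrow> bool) \<Rightarrow> ('p \<Rightarrow> 'a topology)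
   \<Rightarrow> ('p \<Rightarrow> 'a set) \<Rightarrow> ('p \<Rightarrow> 'a \<Rightarrow> 'x) \<Rightarrow> ('p \<Rightarrow> 'p \<Rightarrow> 'a set) \<Rightarrow> ('p \<Rightarrow> 'p \<Rightarrow> 'a \<Rightarrow> 'a)
   \<Rightarrow> bool" where
  "good_coord_system_strong X Z P le U S psi Upq phi \<longleftrightarrow>
     good_coord_system_weak X Z P le U S psi Upq phi \<and>
     equiv (topspace (gcs_disjoint_union P U)) {(a, b). gcs_rel P le U Upq phi a b} \<and>
     Hausdorff_space (gcs_quotient P le U Upq phi)"

definition rel_compact_open :: "'a topology \<Rightarrow> 'a set \<Rightarrow> bool" where
  "rel_compact_open U V \<longleftrightarrow> openin U V \<and> compactin U (U closure_of V)"

end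

theory Submission
  imports Defs
begin


lemma (in Metric_space) sep_base_aux:
  assumes "separable_space mtopology"
  shows "\<exists>B. countable B \<and> (\<forall>b\<in>B. openin mtopology b) \<and>
     (\<forall>W a. openin mtopology W \<longrightarrow> a \<in> W \<longrightarrow> (\<exists>b\<in>B. a \<in> b \<and> mtopology closure_of b \<subseteq> W))"
proof -
  obtain D where D: "countable D" "D \<subseteq> M" "mtopology closure_of D = M"
    using assms unfolding separable_space_def by auto
  define B where "B = (\<lambda>(x,n). mball x (1 / Suc n)) ` (D \<times> (UNIV::nat set))"
  have "countable B" unfolding B_def using D(1) by auto
  moreover have "\<forall>b\<in>B. openin mtopology b" unfolding B_def by auto
  moreover have "\<exists>b\<in>B. a \<in> b \<and> mtopology closure_of b \<subseteq> W" if O: "openin mtopology W" "a \<in> W" for W a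
  proof -
    obtain e where e: "e > 0" "mball a e \<subseteq> W" using O openin_mtopology by blast
    obtain n :: nat where n: "1 / Suc n < e / 3"
      by (metis e(1) divide_pos_pos nat_approx_posE zero_less_numeral)
    have aM: "a \<in> M" using O openin_subset by fastforce
    then have "a \<in> mtopology closure_of D" using D by simp
    then obtain y where y: "y \<in> D" "y \<in> mball a (1 / Suc n)"
      proof -
      have "0 < 1 / real (Suc n)" by simp
      then show ?thesis using that \<open>a \<in> mtopology closure_of D\<close> unfolding metric_closure_of by blast
    qed
    have "mtopology closure_of mball y (1/Suc n) \<subseteq> mcball y (1/Suc n)"
      by (simp add: closure_of_minimal mball_subset_mcball)
    also have "\<dots> \<subseteq> mball a e"
      proof (rule mcball_subset_mball)
      have "d a y < 1 / Suc n" using y by simp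
      moreover have "1 / real (Suc n) + 1 / Suc n < e" using n by (simp add: field_simps)
      ultimately show "d y a + 1 / real (Suc n) < e" using commute by simp
    qed (use aM in auto)
    finally have "mtopology closure_of mball y (1/Suc n) \<subseteq> W" using e by blast
    moreover have "a \<in> mball y (1/Suc n)" using y aM by (auto simp: commute)
    moreover have "mball y (1/Suc n) \<in> B" unfolding B_def using y by auto
    ultimately show ?thesis by blast
  qed
  ultimately show ?thesis by blast
qed

lemma sep_base:
  assumes "metrizable_space X" "separable_space X"
  shows "\<exists>B. countable B \<and> (\<forall>b\<in>B. openin X b) \<and>
     (\<forall>W a. openin X W \<longrightarrow> a \<in> W \<longrightarrow> (\<exists>b\<in>B. a \<in> b \<and> X closure_of b \<subseteq> W))"
  using assms Metric_space.sep_base_aux unfolding metrizable_space_def by metis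



abbreviation RN :: "(nat \<Rightarrow> real) topology" where
  "RN \<equiv> product_topology (\<lambda>_. euclideanreal) UNIV"

lemma RN_metrizable: "metrizable_space RN"
  by (simp add: metrizable_space_product_topology metrizable_space_euclidean)

lemma RN_Hausdorff: "Hausdorff_space RN"
  by (simp add: RN_metrizable metrizable_imp_Hausdorff_space)

lemma RN_second_countable: "second_countable RN"
proof -
  obtain B :: "(nat \<Rightarrow> real) set set" where B: "countable B" "topological_basis B"
    using ex_countable_basis by blast
  show ?thesis
    unfolding euclidean_product_topology second_countable_def
    using B topological_basis_open[OF B(2)] topological_basisE[OF B(2)]
    by (metis open_openin)
qed



lemma key:
  fixes Q :: "'b topology" and U :: "'p \<Rightarrow> 'a topology" and f :: "'p \<Rightarrow> 'a \<Rightarrow> 'b"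
  assumes Haus: "Hausdorff_space Q" and fin: "finite P"
    and cont: "\<And>p. p \<in> P \<Longrightarrow> continuous_map (U p) Q (f p)"
    and ms: "\<And>p. p \<in> P \<Longrightarrow> metrizable_space (U p) \<and> separable_space (U p)"
    and cpt: "\<And>p. p \<in> P \<Longrightarrow> compactin (U p) (C p)"
    and T: "T \<subseteq> (\<Union>p\<in>P. f p ` C p)"
  shows "separable_space (subtopology Q T) \<and> metrizable_space (subtopology Q T)"
proof -
  define K where "K = (\<Union>p\<in>P. f p ` C p)"
  have cK: "compactin Q K" unfolding K_def
    using fin cpt cont by (intro compactin_Union) (auto intro: image_compactin)
  define Y where "Y = subtopology Q K"
  have tY: "topspace Y = K" unfolding Y_def using cK compactin_subset_topspace by auto
  have cY: "compact_space Y" unfolding Y_def using cK compact_space_subtopology by blast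
  have HY: "Hausdorff_space Y" unfolding Y_def using Haus Hausdorff_space_subtopology by blast
  have nY: "normal_space Y" using cY HY compact_Hausdorff_or_regular_imp_normal_space by blast
  have "\<forall>p\<in>P. \<exists>B. countable B \<and> (\<forall>b\<in>B. openin (U p) b) \<and>
     (\<forall>W a. openin (U p) W \<longrightarrow> a \<in> W \<longrightarrow> (\<exists>b\<in>B. a \<in> b \<and> (U p) closure_of b \<subseteq> W))"
    using ms sep_base by blast
  then obtain B where B: "\<And>p. p \<in> P \<Longrightarrow> countable (B p)"
    "\<And>p b. p \<in> P \<Longrightarrow> b \<in> B p \<Longrightarrow> openin (U p) b"
    "\<And>p W a. p \<in> P \<Longrightarrow> openin (U p) W \<Longrightarrow> a \<in> W \<Longrightarrow> (\<exists>b\<in>B p. a \<in> b \<and> (U p) closure_of b \<subseteq> W)"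
    by metis
  define E where "E = (\<lambda>(p,b). f p ` (C p \<inter> (U p) closure_of b))"
  have clE: "closedin Y (E (p,b))" if "p \<in> P" for p b
  proof -
    have "compactin (U p) (C p \<inter> (U p) closure_of b)"
      using cpt[OF that]
    proof (rule closed_compactin)
      have "closedin (U p) (C p)"
        using cpt[OF that] ms[OF that] compactin_imp_closedin metrizable_imp_Hausdorff_space by blast
      then show "closedin (U p) (C p \<inter> U p closure_of b)" by (simp add: closedin_Int)
    qed auto
    then have "compactin Q (E (p,b))" unfolding E_def using cont[OF that]
      by (simp add: image_compactin)
    then have "closedin Q (E (p,b))" using Haus compactin_imp_closedin by blast
    moreover have "E (p,b) \<subseteq> K" unfolding E_def K_def using that by auto
    ultimately show ?thesis unfolding Y_def by (simp add: closedin_subset_topspace)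
  qed
  define J where "J = (SIGMA p:P. B p) \<times> (SIGMA p:P. B p)"
  have cJ: "countable J" unfolding J_def using fin B(1)
    by (intro countable_SIGMA) (auto intro: countable_finite)
  define g where "g = (\<lambda>j y. if j \<in> J \<and> disjnt (E (fst j)) (E (snd j)) then
      (SOME h. continuous_map Y (top_of_set {0..1::real}) h \<and> h ` E (fst j) \<subseteq> {0} \<and> h ` E (snd j) \<subseteq> {1}) y
      else 0)"
  have gprop: "continuous_map Y euclideanreal (g j) \<and>
     (j \<in> J \<and> disjnt (E (fst j)) (E (snd j)) \<longrightarrow> g j ` E (fst j) \<subseteq> {0} \<and> g j ` E (snd j) \<subseteq> {1})" for j
  proof (cases "j \<in> J \<and> disjnt (E (fst j)) (E (snd j))")
    case True
    then obtain p b q c where j: "j = ((p,b),(q,c))" "p \<in> P" "q \<in> P" unfolding J_def by auto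
    have "\<exists>h. continuous_map Y (top_of_set {0..1::real}) h \<and> h ` E (fst j) \<subseteq> {0} \<and> h ` E (snd j) \<subseteq> {1}"
    proof -
      have "disjnt (E (p,b)) (E (q,c))" using True j by simp
      then obtain h where "continuous_map Y (top_of_set {0..1::real}) h" "h ` E (p,b) \<subseteq> {0}" "h ` E (q,c) \<subseteq> {1}"
        using Urysohn_lemma[OF nY clE[OF j(2)] clE[OF j(3)], of b c 0 1] by auto
      then show ?thesis using j by auto
    qed
    from someI_ex[OF this] True show ?thesis
      unfolding g_def using continuous_map_in_subtopology by (simp add: fun_eq_iff) blast
  next
    case False
    then have "g j = (\<lambda>_. 0)" unfolding g_def by auto
    then show ?thesis using False by auto
  qed
  define G where "G = (\<lambda>y n. g (from_nat_into J n) y)"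
  have cG: "continuous_map Y RN G"
    unfolding G_def continuous_map_componentwise_UNIV using gprop by blast
  have iG: "inj_on G K"
  proof (rule inj_onI, rule ccontr)
    fix x y assume xK: "x \<in> K" and yK: "y \<in> K" and eq: "G x = G y" and ne: "x \<noteq> y"
    obtain V W where VW: "openin Q V" "openin Q W" "x \<in> V" "y \<in> W" "disjnt V W"
      proof -
      have "K \<subseteq> topspace Q" using cK compactin_subset_topspace by blast
      then have "x \<in> topspace Q" "y \<in> topspace Q" using xK yK by auto
      then show ?thesis using that Haus ne unfolding Hausdorff_space_def by blast
    qed
    obtain p a where pa: "p \<in> P" "a \<in> C p" "x = f p a" using xK unfolding K_def by auto
    obtain q a' where qa: "q \<in> P" "a' \<in> C q" "y = f q a'" using yK unfolding K_def by auto
    have aT: "a \<in> topspace (U p)" using pa cpt compactin_subset_topspace by blast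
    have a'T: "a' \<in> topspace (U q)" using qa cpt compactin_subset_topspace by blast
    have o1: "openin (U p) {z \<in> topspace (U p). f p z \<in> V}"
      using cont[OF pa(1)] VW(1) by (simp add: continuous_map_def)
    have o2: "openin (U q) {z \<in> topspace (U q). f q z \<in> W}"
      using cont[OF qa(1)] VW(2) by (simp add: continuous_map_def)
    obtain b where b: "b \<in> B p" "a \<in> b" "(U p) closure_of b \<subseteq> {z \<in> topspace (U p). f p z \<in> V}"
      using B(3)[OF pa(1) o1, of a] aT pa VW by auto
    obtain c where c: "c \<in> B q" "a' \<in> c" "(U q) closure_of c \<subseteq> {z \<in> topspace (U q). f q z \<in> W}"
      using B(3)[OF qa(1) o2, of a'] a'T qa VW by auto
    define j where "j = ((p,b),(q,c))"
    have jJ: "j \<in> J" unfolding j_def J_def using pa qa b c by auto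
    have "a \<in> U p closure_of b" using b(2) closure_of_subset openin_subset[OF B(2)[OF pa(1) b(1)]] by blast
    then have xE: "x \<in> E (p,b)" unfolding E_def using pa by auto
    have "a' \<in> U q closure_of c" using c(2) closure_of_subset openin_subset[OF B(2)[OF qa(1) c(1)]] by blast
    then have yE: "y \<in> E (q,c)" unfolding E_def using qa by auto
    have "E (p,b) \<subseteq> V" unfolding E_def using b by auto
    moreover have "E (q,c) \<subseteq> W" unfolding E_def using c by auto
    ultimately have dj: "disjnt (E (fst j)) (E (snd j))" using VW(5) unfolding j_def fst_conv snd_conv disjnt_def
      by blast
    have "J \<noteq> {}" using jJ by auto
    then have jn: "from_nat_into J (to_nat_on J j) = j" using cJ jJ by (simp add: from_nat_into_to_nat_on)
    have "G x (to_nat_on J j) = 0" unfolding G_def jn using gprop[of j] jJ dj xE unfolding j_def by auto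
    moreover have "G y (to_nat_on J j) = 1" unfolding G_def jn using gprop[of j] jJ dj yE unfolding j_def by auto
    ultimately show False using eq by simp
  qed
  have "closed_map Y RN G"
    using cY RN_Hausdorff cG by (simp add: Hausdorff_imp_kc_space continuous_imp_closed_map_gen)
  then have emb: "embedding_map Y RN G"
    using cG iG tY by (simp add: injective_closed_imp_embedding_map)
  have TK: "T \<subseteq> K" using T unfolding K_def .
  have "homeomorphic_map (subtopology Y T) (subtopology (subtopology RN (G ` K)) (G ` T)) G"
    using emb unfolding embedding_map_def tY
    by (rule homeomorphic_map_subtopologies) (use TK tY in \<open>auto\<close>)
  then have hom: "subtopology Q T homeomorphic_space subtopology RN (G ` T)"
  proof -
    have "subtopology Y T = subtopology Q T" unfolding Y_def subtopology_subtopology using TK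
      by (simp add: Int_absorb1)
    moreover have "subtopology (subtopology RN (G ` K)) (G ` T) = subtopology RN (G ` T)"
      unfolding subtopology_subtopology using TK by (simp add: Int_absorb1 image_mono)
    ultimately show ?thesis using homeomorphic_space \<open>homeomorphic_map _ _ G\<close> by metis
  qed
  have "second_countable (subtopology RN (G ` T))"
    using RN_second_countable second_countable_subtopology by blast
  then have "separable_space (subtopology Q T)"
    using hom homeomorphic_space_second_countability second_countable_imp_separable_space by blast
  moreover have "metrizable_space (subtopology Q T)"
    using hom homeomorphic_metrizable_space RN_metrizable metrizable_space_subtopology by blast
  ultimately show ?thesis by blast
qed



lemma openin_quotient_topology:
  "openin (quotient_topology X r) = (\<lambda>T. T \<subseteq> qclass X r ` topspace X \<and>
                   openin X {x \<in> topspace X. qclass X r x \<in> T})"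
  unfolding quotient_topology_def by (rule topology_inverse'[OF istopology_quotient])

lemma continuous_qclass: "continuous_map X (quotient_topology X r) (qclass X r)"
proof -
  have "openin (quotient_topology X r) (qclass X r ` topspace X)"
  proof -
    have "{x \<in> topspace X. qclass X r x \<in> qclass X r ` topspace X} = topspace X" by auto
    then show ?thesis unfolding openin_quotient_topology by simp
  qed
  then have "qclass X r ` topspace X \<subseteq> topspace (quotient_topology X r)"
    by (rule openin_subset)
  then show ?thesis unfolding continuous_map_def openin_quotient_topology by auto
qed

theorem proposition2p11:
  fixes X :: "'x topology" and Z :: "'x set" and P :: "'p set"
    and le :: "'p \<Rightarrow> 'p \<Rightarrow> bool" and U :: "'p \<Rightarrow> 'a topology"
    and S :: "'p \<Rightarrow> 'a set" and psi :: "'p \<Rightarrow> 'a \<Rightarrow> 'x"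
    and Upq :: "'p \<Rightarrow> 'p \<Rightarrow> 'a set" and phi :: "'p \<Rightarrow> 'p \<Rightarrow> 'a \<Rightarrow> 'a"
    and U' :: "'p \<Rightarrow> 'a set"
  assumes "lcsm_space X"
    and "compactin X Z"
    and "good_coord_system_strong X Z P le U S psi Upq phi"
    and "\<forall>p\<in>P. rel_compact_open (U p) (U' p)"
  shows "separable_space (subtopology (gcs_quotient P le U Upq phi)
            (\<Union>p\<in>P. gcs_proj P le U Upq phi p ` U' p))
       \<and> metrizable_space (subtopology (gcs_quotient P le U Upq phi)
            (\<Union>p\<in>P. gcs_proj P le U Upq phi p ` U' p))"
proof (rule key)
  define D where "D = gcs_disjoint_union P U"
  define r where "r = gcs_rel P le U Upq phi"
  have weak: "good_coord_system_weak X Z P le U S psi Upq phi"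
    using assms(3) unfolding good_coord_system_strong_def by blast
  show "Hausdorff_space (gcs_quotient P le U Upq phi)"
    using assms(3) by (simp add: good_coord_system_strong_def)
  show "finite P" using weak by (simp add: good_coord_system_weak_def)
  have cq: "continuous_map D (gcs_quotient P le U Upq phi) (qclass D r)"
    unfolding D_def r_def gcs_quotient_def by (rule continuous_qclass)
  show "continuous_map (U p) (gcs_quotient P le U Upq phi) (\<lambda>x. qclass D r (p, x))" if "p \<in> P" for p
  proof -
    have "continuous_map (U p) D (\<lambda>x. (p, x))"
      unfolding D_def gcs_disjoint_union_def using that by (rule continuous_map_component_injection)
    from continuous_map_compose[OF this cq] show ?thesis by (simp add: o_def)
  qed
  show "metrizable_space (U p) \<and> separable_space (U p)" if "p \<in> P" for p
  proof -
    have "\<forall>p\<in>P. abstract_K_chart X (U p) (S p) (psi p)" using weak by (simp add: good_coord_system_weak_def)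
    then have "lcsm_space (U p)" using that by (simp add: abstract_K_chart_def)
    then show ?thesis by (simp add: lcsm_space_def)
  qed
  show "compactin (U p) (U p closure_of U' p)" if "p \<in> P" for p
    using assms(4) that unfolding rel_compact_open_def by blast
  have "U' p \<subseteq> U p closure_of U' p" if "p \<in> P" for p
  proof -
    have "openin (U p) (U' p)" using assms(4) that unfolding rel_compact_open_def by blast
    then show ?thesis by (simp add: closure_of_subset openin_subset)
  qed
  then show "(\<Union>p\<in>P. gcs_proj P le U Upq phi p ` U' p) \<subseteq> (\<Union>p\<in>P. (\<lambda>x. qclass D r (p, x)) ` (U p closure_of U' p))"
    unfolding gcs_proj_def D_def r_def by (intro UN_mono) auto
qed

end
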